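(* Let $G$ be a graph, $\ell\ge 1$, and let $B\subseteq V(G)$ be an $(\ell-1)$-leaky forcing set of $G$. If $L$ is a set of $k\ge \ell$ specified leaks, then $|L-B^{[\infty]}_L|\le k-\ell$, where for $S\subseteq V(G)$, $L-S=\{x\to y\in L: x\notin S\}$.
   Context: All graphs are finite, simple and undirected. Zero forcing: a blue vertex $u$ with exactly one white neighbor $w$ may force $w$ (color it blue), written $u\to w$. A vertex leak is a vertex not allowed to perform any force; $B$ is an $\ell$-leaky forcing set if for every set of at most $\ell$ vertex leaks, exhaustively applying the forcing rule from initial blue set $B$ colors all of $V(G)$ blue (a $0$-leaky forcing set is a zero forcing set). A specified leak is an ordered pair $x\to y$ indicating that $x$ (the tail) is prohibited from forcing $y$ (the head). For a set $L$ of specified leaks, $B^{[\infty]}_L$ is the set of blue vertices obtained from $B$ after exhaustively applying the forcing rule while never performing a force in $L$ (independent of the order of forces). *)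

theory Defs
  imports Main
begin

definition simple_graph :: "'a set \<Rightarrow> ('a \<Rightarrow> 'a \<Rightarrow> bool) \<Rightarrow> bool" where
  "simple_graph V E \<longleftrightarrow> finite V \<and> (\<forall>x y. E x y \<longrightarrow> x \<in> V \<and> y \<in> V)
     \<and> (\<forall>x y. E x y \<longrightarrow> E y x) \<and> (\<forall>x. \<not> E x x)"

definition force_step ::
  "('a \<Rightarrow> 'a \<Rightarrow> bool) \<Rightarrow> ('a \<Rightarrow> 'a \<Rightarrow> bool) \<Rightarrow> 'a set \<Rightarrow> 'a set \<Rightarrow> bool" where
  "force_step E allowed S S' \<longleftrightarrow>
     (\<exists>u w. u \<in> S \<and> E u w \<and> w \<notin> S \<and> (\<forall>v. E u v \<and> v \<notin> S \<longrightarrow> v = w)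
        \<and> allowed u w \<and> S' = insert w S)"

text \<open>Final coloured set after exhaustively applying permitted forces
  (a terminal set reachable from B; it is independent of the order of forces).\<close>
definition final_blue ::
  "('a \<Rightarrow> 'a \<Rightarrow> bool) \<Rightarrow> ('a \<Rightarrow> 'a \<Rightarrow> bool) \<Rightarrow> 'a set \<Rightarrow> 'a set" where
  "final_blue E allowed B =
     (THE S. (force_step E allowed)\<^sup>*\<^sup>* B S \<and> \<not> (\<exists>S'. force_step E allowed S S'))"

definition closure_spec :: "('a \<Rightarrow> 'a \<Rightarrow> bool) \<Rightarrow> ('a \<times> 'a) set \<Rightarrow> 'a set \<Rightarrow> 'a set" where
  "closure_spec E L B = final_blue E (\<lambda>u w. (u, w) \<notin> L) B"

definition leaky_forcing_set :: "'a set \<Rightarrow> ('a \<Rightarrow> 'a \<Rightarrow> bool) \<Rightarrow> nat \<Rightarrow> 'a set \<Rightarrow> bool" where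
  "leaky_forcing_set V E l B \<longleftrightarrow> B \<subseteq> V \<and>
     (\<forall>X. X \<subseteq> V \<and> card X \<le> l \<longrightarrow> final_blue E (\<lambda>u w. u \<notin> X) B = V)"

definition leak_minus :: "('a \<times> 'a) set \<Rightarrow> 'a set \<Rightarrow> ('a \<times> 'a) set" where
  "leak_minus L S = {(x, y) \<in> L. x \<notin> S}"

end

theory Submission
  imports Defs
begin

lemma reach_sub:
  assumes "(force_step E a)\<^sup>*\<^sup>* B T" "B \<subseteq> C" "\<not> (\<exists>S'. force_step E a C S')"
  shows "T \<subseteq> C"
  using assms(1)
proof induction
  case base then show ?case using assms(2) .
next
  case (step T T')
  from step.hyps(2) obtain u w where uw: "u \<in> T" "E u w" "w \<notin> T" "\<forall>v. E u v \<and> v \<notin> T \<longrightarrow> v = w"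
    "a u w" "T' = insert w T" unfolding force_step_def by blast
  show ?case
  proof (rule ccontr)
    assume "\<not> T' \<subseteq> C"
    then have wC: "w \<notin> C" using uw(6) step.IH by simp
    have uC: "u \<in> C" using uw(1) step.IH by (rule subsetD[rotated])
    have un: "\<forall>v. E u v \<and> v \<notin> C \<longrightarrow> v = w" using uw(4) step.IH by blast
    have "force_step E a C (insert w C)" unfolding force_step_def
      by (intro exI[of _ u] exI[of _ w]) (simp add: uC wC un uw(2,5))
    then show False using assms(3) by blast
  qed
qed

lemma reach_mono:
  assumes "(force_step E a)\<^sup>*\<^sup>* B T"
  shows "B \<subseteq> T"
  using assms
proof induction
  case base then show ?case by simp
next
  case (step T T')
  then show ?case unfolding force_step_def by blast
qed

lemma exists_term:
  assumes "finite V" "\<forall>x y. E x y \<longrightarrow> x \<in> V \<and> y \<in> V"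
  shows "S \<subseteq> V \<Longrightarrow> (force_step E a)\<^sup>*\<^sup>* B S \<Longrightarrow>
     \<exists>T. (force_step E a)\<^sup>*\<^sup>* B T \<and> \<not> (\<exists>S'. force_step E a T S')"
proof (induction "card (V - S)" arbitrary: S rule: less_induct)
  case less
  show ?case
  proof (cases "\<exists>S'. force_step E a S S'")
    case False then show ?thesis using less.prems by blast
  next
    case True
    then obtain S' where s: "force_step E a S S'" by blast
    then obtain u w where w: "w \<notin> S" "E u w" "S' = insert w S"
      unfolding force_step_def by blast
    then have "w \<in> V" using assms(2) by blast
    note w = w this
    have "card (V - S') < card (V - S)"
      proof -
      have "V - S' = (V - S) - {w}" using w by auto
      have "w \<in> V - S" using w by auto
      have fin: "finite (V - S)" using assms(1) by simp
      have "card ((V - S) - {w}) < card (V - S)" using card_Diff1_less[OF fin \<open>w \<in> V - S\<close>] .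
      then show ?thesis using \<open>V - S' = V - S - {w}\<close> by simp
    qed
    moreover have "S' \<subseteq> V" using w less.prems by auto
    moreover have "(force_step E a)\<^sup>*\<^sup>* B S'" using rtranclp.rtrancl_into_rtrancl[OF less.prems(2) s] .
    ultimately show ?thesis by (rule less.hyps)
  qed
qed

lemma final_props:
  assumes "simple_graph V E" "B \<subseteq> V"
  shows "(force_step E a)\<^sup>*\<^sup>* B (final_blue E a B) \<and> \<not> (\<exists>S'. force_step E a (final_blue E a B) S')"
proof -
  obtain T where T: "(force_step E a)\<^sup>*\<^sup>* B T" "\<not> (\<exists>S'. force_step E a T S')"
    using exists_term[of V E B a B] assms unfolding simple_graph_def by blast
  have U: "\<And>S. (force_step E a)\<^sup>*\<^sup>* B S \<and> \<not> (\<exists>S'. force_step E a S S') \<Longrightarrow> S = T"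
  proof -
    fix S assume S: "(force_step E a)\<^sup>*\<^sup>* B S \<and> \<not> (\<exists>S'. force_step E a S S')"
    have "B \<subseteq> S" "B \<subseteq> T" using reach_mono[of E a B S] reach_mono[of E a B T] S T by auto
    have "S \<subseteq> T" using reach_sub[of E a B S T] \<open>B \<subseteq> T\<close> S T by simp
    moreover have "T \<subseteq> S" using reach_sub[of E a B T S] \<open>B \<subseteq> S\<close> S T by simp
    ultimately show "S = T" by (rule equalityI)
  qed
  have "final_blue E a B = T" unfolding final_blue_def
    by (rule the_equality[where P="\<lambda>S. (force_step E a)\<^sup>*\<^sup>* B S \<and> \<not> (\<exists>S'. force_step E a S S')", OF conjI[OF T(1) T(2)] U])
  then show ?thesis using T by simp
qed

lemma final_sub:
  assumes "simple_graph V E" "B \<subseteq> V" "B \<subseteq> C" "\<not> (\<exists>S'. force_step E a C S')"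
  shows "final_blue E a B \<subseteq> C"
proof -
  have "(force_step E a)\<^sup>*\<^sup>* B (final_blue E a B)" using final_props[OF assms(1,2), of a] by (rule conjunct1)
  then show ?thesis by (rule reach_sub[OF _ assms(3,4)])
qed

theorem proposition3p3:
  fixes V :: "'a set" and E :: "'a \<Rightarrow> 'a \<Rightarrow> bool" and B :: "'a set"
    and L :: "('a \<times> 'a) set" and l k :: nat
  assumes "simple_graph V E"
    and "l \<ge> 1"
    and "leaky_forcing_set V E (l - 1) B"
    and "L \<subseteq> V \<times> V"
    and "card L = k"
    and "k \<ge> l"
  shows "card (leak_minus L (closure_spec E L B)) \<le> k - l"
proof -
  define C where "C = closure_spec E L B"
  have BV: "B \<subseteq> V" using assms(3) unfolding leaky_forcing_set_def by auto
  have finL: "finite L" using assms(4) assms(1) unfolding simple_graph_def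
    using finite_subset[OF assms(4)] by blast
  have Cp: "(force_step E (\<lambda>u w. (u, w) \<notin> L))\<^sup>*\<^sup>* B C \<and> \<not> (\<exists>S'. force_step E (\<lambda>u w. (u, w) \<notin> L) C S')"
    unfolding C_def closure_spec_def using final_props[OF assms(1) BV] by blast
  have BC: "B \<subseteq> C" using reach_mono[OF conjunct1[OF Cp]] .
  define A where "A = {(x, y) \<in> L. x \<in> C}"
  have LM: "leak_minus L C = L - A" unfolding leak_minus_def A_def by auto
  have AL: "A \<subseteq> L" unfolding A_def by auto
  have finA: "finite A" using AL finL finite_subset by blast
  have cardLM: "card (leak_minus L C) = k - card A"
    using LM AL finA assms(5) card_Diff_subset[OF finA AL] by simp
  show ?thesis
  proof (cases "card A \<ge> l")
    case True then show ?thesis using cardLM C_def by simp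
  next
    case False
    define X where "X = fst ` A"
    have XV: "X \<subseteq> V" using AL assms(4) X_def by auto
    have cX: "card X \<le> l - 1" using False card_image_le[OF finA, of fst] X_def by simp
    have "final_blue E (\<lambda>u w. u \<notin> X) B = V"
      using assms(3) XV cX unfolding leaky_forcing_set_def by simp
    moreover have "\<not> (\<exists>S'. force_step E (\<lambda>u w. u \<notin> X) C S')"
    proof
      assume "\<exists>S'. force_step E (\<lambda>u w. u \<notin> X) C S'"
      then obtain S' where "force_step E (\<lambda>u w. u \<notin> X) C S'" by (elim exE)
      then obtain u w where uw: "u \<in> C" "E u w" "w \<notin> C" "\<forall>v. E u v \<and> v \<notin> C \<longrightarrow> v = w"
        "u \<notin> X" unfolding force_step_def apply (elim exE conjE) apply (rule that) by assumption+
      have "(u, w) \<in> L"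
      proof (rule ccontr)
        assume nL: "(u, w) \<notin> L"
        have "force_step E (\<lambda>u w. (u, w) \<notin> L) C (insert w C)"
          unfolding force_step_def
          apply (rule exI[of _ u], rule exI[of _ w])
          apply (intro conjI)
          by (fact uw(1), fact uw(2), fact uw(3), fact uw(4), fact nL, rule refl)
        then have "\<exists>S'. force_step E (\<lambda>u w. (u, w) \<notin> L) C S'" by (rule exI)
        with conjunct2[OF Cp] show False by (rule notE)
      qed
      then have "(u, w) \<in> A" using uw(1) unfolding A_def by simp
      then have "u \<in> X" unfolding X_def using image_eqI[of u fst "(u,w)" A] by simp
      then show False using uw(5) by (rule notE[rotated])
    qed
    ultimately have "V \<subseteq> C" using final_sub[OF assms(1) BV BC, of "\<lambda>u w. u \<notin> X"] by simp
    then have "leak_minus L C = {}" unfolding leak_minus_def using assms(4) by auto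
    then show ?thesis using C_def by simp
  qed
qed

end
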